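(* Let $n$ be a positive integer and let $N = n^2+n+1$. Call a pair of integers $(k,x)$ a nontrivial solution for $n$ if $k \ge 1$, $x \ge 2$, $x \ne k$, $x \ne 2$, $k \ne n-1$, and \[ \sum_{j=1}^{n} j^3 + x^3 - k^3 = \left( \sum_{j=1}^{n} j + x - k \right)^2 . \] Then a nontrivial solution for $n$ exists if and only if $N$ has at least two prime factors, counted with multiplicity, that are congruent to $1 \pmod 3$.
   Context: The exclusions $x \ne k$, $x\ne 2$, $k \ne n-1$ remove the trivial solutions $(x,x)$ and $(n-1,2)$, which satisfy the identity for every $n$. "Counted with multiplicity" means: if $N=\prod p^{e_p}$, the number of such factors is $\sum_{p\equiv 1 \ (\mathrm{mod}\ 3)} e_p$. *)

theory Defs
  imports "HOL-Computational_Algebra.Primes"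
begin

definition nontrivial_solution :: "nat \<Rightarrow> int \<Rightarrow> int \<Rightarrow> bool" where
  "nontrivial_solution n k x \<longleftrightarrow>
     k \<ge> 1 \<and> x \<ge> 2 \<and> x \<noteq> k \<and> x \<noteq> 2 \<and> k \<noteq> int n - 1 \<and>
     (\<Sum>j=1..int n. j ^ 3) + x ^ 3 - k ^ 3 = ((\<Sum>j=1..int n. j) + x - k) ^ 2"

definition num_prime_factors_1mod3 :: "nat \<Rightarrow> nat" where
  "num_prime_factors_1mod3 m =
     (\<Sum>p\<in>{p \<in> prime_factors m. p mod 3 = 1}. multiplicity p m)"

end

theory Submission
  imports Defs "HOL-Number_Theory.Residues"
begin

lemma Q_decomp: "(x::int)^2+x*y+y^2 = (x - n*y)*(x+(n+1)*y) + (n^2+n+1)*y^2"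
  by (simp add: algebra_simps power2_eq_square)

lemma notsq: assumes "(n::int) \<ge> 1" shows "z^2 \<noteq> n^2+n+1"
proof
  assume h: "z^2 = n^2+n+1"
  have z2: "z^2 = \<bar>z\<bar>^2" by simp
  show False
  proof (cases "\<bar>z\<bar> \<le> n")
    case True
    then have "\<bar>z\<bar>^2 \<le> n^2" by (intro power_mono) auto
    then show False using h z2 assms by linarith
  next
    case False
    then have "(n+1)^2 \<le> \<bar>z\<bar>^2" using assms by (intro power_mono) auto
    then show False using h z2 assms by (simp add: power2_eq_square algebra_simps)
  qed
qed

lemma pos_bound: assumes "(n::int) \<ge> 1" "u \<ge> 0" "v \<ge> 0" "u^2+u*v+v^2 = n^2+n+1"
  shows "u \<le> n"
proof (rule ccontr)
  assume "\<not> u \<le> n"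
  then have "(n+1)^2 \<le> u^2" using assms by (intro power_mono) auto
  moreover have "u*v \<ge> 0" "v*v \<ge> 0" using assms by auto
  ultimately show False using assms(1,4) unfolding power2_eq_square by (simp add: algebra_simps)
qed

lemma triv_A: assumes "(n::int) \<ge> 1" "u \<ge> 1" "v \<ge> 1" "u^2+u*v+v^2 = n^2+n+1"
  "(n^2+n+1) dvd (u - n*v)" shows "v = 1"
proof -
  have un: "u \<le> n" using pos_bound[of n u v] assms(1-4) by linarith
  have "v^2+v*u+u^2 = n^2+n+1" using assms(4) by (simp add: algebra_simps)
  hence vn: "v \<le> n" using pos_bound[of n v u] assms(1-3) by linarith
  obtain t where t: "u - n*v = (n^2+n+1)*t" using assms(5) by blast
  have "n*v \<ge> n" using assms by simp
  hence a1: "u - n*v \<le> 0" using un by linarith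
  have "n*v \<le> n*n" using vn assms by (intro mult_left_mono) auto
  hence a2: "u - n*v > -(n^2+n+1)" using assms(1,2) unfolding power2_eq_square by linarith
  have "t \<le> 0"
  proof (rule ccontr)
    assume "\<not> t \<le> 0" hence "t \<ge> 1" by simp
    hence "(n^2+n+1)*t \<ge> (n^2+n+1)*1" using assms(1)
      by (intro mult_left_mono) (auto simp: add_nonneg_nonneg)
    moreover have "n^2+n+1 > 0" using assms(1) by (simp add: add_pos_nonneg)
    ultimately show False using a1 t by (simp only: mult_1_right)
  qed
  moreover have "t \<ge> 0"
  proof (rule ccontr)
    assume "\<not> t \<ge> 0" hence "t \<le> -1" by simp
    hence "(n^2+n+1)*t \<le> (n^2+n+1)*(-1)" using assms(1)
      by (intro mult_left_mono) (auto simp: add_nonneg_nonneg)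
    thus False using a2 t by simp
  qed
  ultimately have "t = 0" by simp
  hence "u = n*v" using t by simp
  hence "v^2*(n^2+n+1) = 1*(n^2+n+1)" using assms(4) by (simp add: power2_eq_square algebra_simps)
  moreover have "n^2+n+1 \<noteq> 0" using assms(1) by (smt (verit) zero_le_power2)
  ultimately have "v^2 = 1" by (metis mult_right_cancel)
  thus "v = 1" using assms(3) by (simp add: power2_eq_1_iff)
qed

lemma triv_B: assumes "(n::int) \<ge> 1" "u \<ge> 1" "v \<ge> 1" "u^2+u*v+v^2 = n^2+n+1"
  "(n^2+n+1) dvd (u + (n+1)*v)" shows "u = 1"
proof -
  have un: "u \<le> n" using pos_bound[of n u v] assms(1-4) by linarith
  have "v^2+v*u+u^2 = n^2+n+1" using assms(4) by (simp add: algebra_simps)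
  hence vn: "v \<le> n" using pos_bound[of n v u] assms(1-3) by linarith
  obtain s where s: "u + (n+1)*v = (n^2+n+1)*s" using assms(5) by blast
  have Npos: "n^2+n+1 > 0" using assms(1) by (simp add: add_pos_nonneg)
  have "(n+1)*v > 0" using assms by simp
  hence b1: "u + (n+1)*v > 0" using assms(2) by linarith
  have "(n+1)*v \<le> (n+1)*n" using vn assms(1) by (intro mult_left_mono) auto
  moreover have "n*n \<ge> 0" by simp
  moreover have "(n+1)*n = n*n + n" by (simp add: algebra_simps)
  ultimately have b2: "u + (n+1)*v < 2*(n^2+n+1)" using un assms(1) unfolding power2_eq_square
    by (smt (verit))
  have "s \<ge> 1"
  proof (rule ccontr)
    assume "\<not> s \<ge> 1" hence "s \<le> 0" by simp
    hence "(n^2+n+1)*s \<le> (n^2+n+1)*0" using Npos by (intro mult_left_mono) auto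
    thus False using b1 s by simp
  qed
  moreover have "s \<le> 1"
  proof (rule ccontr)
    assume "\<not> s \<le> 1" hence "s \<ge> 2" by simp
    hence "(n^2+n+1)*s \<ge> (n^2+n+1)*2" using Npos by (intro mult_left_mono) auto
    thus False using b2 s by (simp add: algebra_simps)
  qed
  ultimately have s1: "s = 1" by simp
  hence us: "u = (n^2+n+1) - (n+1)*v" using s by simp
  have "u^2+u*v+v^2 = (n^2+n+1) * (u - n*v + v^2)"
    unfolding Q_decomp[of u v n] s s1 by (simp add: algebra_simps)
  hence "(n^2+n+1) * (u - n*v + v^2) = (n^2+n+1) * 1" using assms(4) by simp
  hence e1: "u - n*v + v^2 = 1" using Npos by (metis mult_left_cancel less_irrefl)
  have "(v - n)*(v - n - 1) = 0" using e1 us by (simp add: algebra_simps power2_eq_square)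
  hence "v = n" using vn by simp
  thus "u = 1" using us by (simp add: algebra_simps power2_eq_square)
qed

lemma prim_A: assumes "(x::int)^2+x*y+y^2 = n^2+n+1" "(n^2+n+1) dvd (x - n*y)"
  "c dvd x" "c dvd y" "n \<ge> 1" shows "c dvd 1"
proof -
  obtain t where t: "x - n*y = (n^2+n+1)*t" using assms(2) by blast
  have Npos: "n^2+n+1 > 0" using assms(5) by (simp add: add_pos_nonneg)
  have "x^2+x*y+y^2 = (n^2+n+1) * (t*(x+(n+1)*y) + y^2)"
    unfolding Q_decomp[of x y n] t by (simp add: algebra_simps)
  hence "(n^2+n+1) * (t*(x+(n+1)*y) + y^2) = (n^2+n+1) * 1" using assms(1) by simp
  hence "t*(x+(n+1)*y) + y^2 = 1" using Npos by (metis mult_left_cancel less_irrefl)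
  moreover have "c dvd t*(x+(n+1)*y) + y^2" using assms(3,4) by (simp add: power2_eq_square)
  ultimately show ?thesis by simp
qed

lemma prim_B: assumes "(x::int)^2+x*y+y^2 = n^2+n+1" "(n^2+n+1) dvd (x + (n+1)*y)"
  "c dvd x" "c dvd y" "n \<ge> 1" shows "c dvd 1"
proof -
  obtain t where t: "x + (n+1)*y = (n^2+n+1)*t" using assms(2) by blast
  have Npos: "n^2+n+1 > 0" using assms(5) by (simp add: add_pos_nonneg)
  have "x^2+x*y+y^2 = (n^2+n+1) * (t*(x-n*y) + y^2)"
    unfolding Q_decomp[of x y n] t by (simp add: algebra_simps)
  hence "(n^2+n+1) * (t*(x-n*y) + y^2) = (n^2+n+1) * 1" using assms(1) by simp
  hence "t*(x-n*y) + y^2 = 1" using Npos by (metis mult_left_cancel less_irrefl)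
  moreover have "c dvd t*(x-n*y) + y^2" using assms(3,4) by (simp add: power2_eq_square)
  ultimately show ?thesis by simp
qed

lemma par: assumes "even ((x::int)^2+x*y+y^2)" shows "even x \<and> even y"
  using assms by (cases "even x"; cases "even y") (auto simp: power2_eq_square)

lemma Qpos: assumes "(x::int) \<noteq> 0 \<or> y \<noteq> 0" shows "x^2+x*y+y^2 > 0"
proof (cases "y = 0")
  case True then show ?thesis using assms by simp
next
  case False
  have "4*(x^2+x*y+y^2) = (2*x+y)^2 + 3*y^2" by (simp add: algebra_simps power2_eq_square)
  moreover have "y^2 > 0" using False by simp
  moreover have "(2*x+y)^2 \<ge> 0" by simp
  ultimately show ?thesis by (smt (verit))
qed

lemma Qle: assumes "\<bar>x::int\<bar> \<le> n" "\<bar>y\<bar> \<le> n" shows "x^2+x*y+y^2 \<le> 3*n^2"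
proof -
  have "x^2 = \<bar>x\<bar>^2" "y^2 = \<bar>y\<bar>^2" by simp_all
  moreover have "\<bar>x\<bar>^2 \<le> n^2" "\<bar>y\<bar>^2 \<le> n^2" using assms by (intro power_mono; simp)+
  moreover have "x*y \<le> \<bar>x\<bar>*\<bar>y\<bar>" by (simp add: abs_mult[symmetric])
  moreover have "\<bar>x\<bar>*\<bar>y\<bar> \<le> n*n" using assms by (intro mult_mono) auto
  ultimately show ?thesis unfolding power2_eq_square by linarith
qed

lemma lattice:
  fixes n d e :: int
  assumes n1: "n \<ge> 1" and d: "d \<ge> 1" and e: "e \<ge> 1" and de: "d*e = n^2+n+1"
  shows "\<exists>x y. x^2+x*y+y^2 = n^2+n+1 \<and> d dvd (x - n*y) \<and> e dvd (x + (n+1)*y)"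
proof -
  define D where "D = {0..n} \<times> {0..n}"
  define f where "f = (\<lambda>(a,b). ((a - n*b) mod d, (a + (n+1)*b) mod e))"
  have fD: "f ` D \<subseteq> {0..<d} \<times> {0..<e}" using d e by (auto simp: f_def D_def)
  have cD: "card D = nat (n+1) * nat (n+1)" by (simp add: D_def card_cartesian_product)
  have cC: "card ({0..<d} \<times> {0..<e}) = nat d * nat e" by (simp add: card_cartesian_product)
  have "\<not> inj_on f D"
  proof
    assume "inj_on f D"
    hence "card D \<le> card ({0..<d} \<times> {0..<e})" using fD by (intro card_inj_on_le) auto
    hence "nat (n+1) * nat (n+1) \<le> nat d * nat e" using cD cC by simp
    hence "nat ((n+1) * (n+1)) \<le> nat (d * e)" using n1 d e by (simp add: nat_mult_distrib)
    hence "(n+1)*(n+1) \<le> d*e" using d e by (simp add: nat_le_eq_zle)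
    thus False using de n1 by (simp add: power2_eq_square algebra_simps)
  qed
  then obtain p1 p2 where p: "p1 \<in> D" "p2 \<in> D" "p1 \<noteq> p2" "f p1 = f p2"
    unfolding inj_on_def by blast
  obtain a1 b1 where p1: "p1 = (a1,b1)" by (cases p1)
  obtain a2 b2 where p2: "p2 = (a2,b2)" by (cases p2)
  define x where "x = a1 - a2"
  define y where "y = b1 - b2"
  have r: "0 \<le> a1" "a1 \<le> n" "0 \<le> a2" "a2 \<le> n" "0 \<le> b1" "b1 \<le> n" "0 \<le> b2" "b2 \<le> n"
    using p(1,2) p1 p2 by (auto simp: D_def)
  have bx: "\<bar>x\<bar> \<le> n" "\<bar>y\<bar> \<le> n" using r by (auto simp: x_def y_def)
  have nz: "x \<noteq> 0 \<or> y \<noteq> 0" using p(3) p1 p2 by (auto simp: x_def y_def)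
  have m1: "(a1 - n*b1) mod d = (a2 - n*b2) mod d" and m2: "(a1 + (n+1)*b1) mod e = (a2 + (n+1)*b2) mod e"
    using p(4) p1 p2 by (auto simp: f_def)
  have dA: "d dvd (x - n*y)"
  proof -
    have "d dvd (a1 - n*b1) - (a2 - n*b2)" using m1 by (simp add: mod_eq_dvd_iff)
    moreover have "(a1 - n*b1) - (a2 - n*b2) = x - n*y" by (simp add: x_def y_def algebra_simps)
    ultimately show ?thesis by simp
  qed
  have eB: "e dvd (x + (n+1)*y)"
  proof -
    have "e dvd (a1 + (n+1)*b1) - (a2 + (n+1)*b2)" using m2 by (simp add: mod_eq_dvd_iff)
    moreover have "(a1 + (n+1)*b1) - (a2 + (n+1)*b2) = x + (n+1)*y" by (simp add: x_def y_def algebra_simps)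
    ultimately show ?thesis by simp
  qed
  have "d*e dvd (x - n*y)*(x + (n+1)*y)" using dA eB by (rule mult_dvd_mono)
  hence "(n^2+n+1) dvd (x - n*y)*(x + (n+1)*y) + (n^2+n+1)*y^2" using de by simp
  hence "(n^2+n+1) dvd x^2+x*y+y^2" using Q_decomp[of x y n] by simp
  then obtain c where c: "x^2+x*y+y^2 = (n^2+n+1)*c" by blast
  have Npos: "n^2+n+1 > 0" using n1 by (simp add: add_pos_nonneg)
  have Qp: "x^2+x*y+y^2 > 0" using Qpos nz by blast
  have Ql: "x^2+x*y+y^2 \<le> 3*n^2" using Qle bx by blast
  have c1: "c \<ge> 1"
  proof (rule ccontr)
    assume "\<not> c \<ge> 1" hence "c \<le> 0" by simp
    hence "(n^2+n+1)*c \<le> (n^2+n+1)*0" using Npos by (intro mult_left_mono) auto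
    thus False using Qp c by simp
  qed
  have c2: "c \<le> 2"
  proof (rule ccontr)
    assume "\<not> c \<le> 2" hence "c \<ge> 3" by simp
    hence "(n^2+n+1)*c \<ge> (n^2+n+1)*3" using Npos by (intro mult_left_mono) auto
    thus False using Ql c n1 by (simp add: algebra_simps)
  qed
  have "c \<noteq> 2"
  proof
    assume "c = 2"
    hence Q2: "x^2+x*y+y^2 = 2*(n^2+n+1)" using c by simp
    hence "even (x^2+x*y+y^2)" by simp
    hence "even x \<and> even y" by (rule par)
    then obtain x' y' where "x = 2*x'" "y = 2*y'" by (auto elim!: evenE)
    hence "x^2+x*y+y^2 = 4*(x'^2+x'*y'+y'^2)" by (simp add: power2_eq_square algebra_simps)
    hence "2*(n^2+n+1) = 2*(2*(x'^2+x'*y'+y'^2))" using Q2 by simp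
    hence "n^2+n+1 = 2*(x'^2+x'*y'+y'^2)" by simp
    hence "even (n^2+n+1)" by simp
    moreover have "even (n^2+n)" by (simp add: power2_eq_square)
    ultimately show False by simp
  qed
  hence "c = 1" using c1 c2 by simp
  thus ?thesis using c dA eB by auto
qed

lemma prime_mod3:
  fixes n p :: nat
  assumes p: "prime p" and dv: "p dvd n^2+n+1" and p3: "p \<noteq> 3"
  shows "p mod 3 = 1"
proof -
  have n1: "n \<ge> 1"
  proof (rule ccontr)
    assume "\<not> n \<ge> 1" hence "n = 0" by simp
    thus False using dv p by simp
  qed
  have key: "p dvd n - 1 \<Longrightarrow> False"
  proof -
    assume h: "p dvd n - 1"
    have "n^2+n+1 = (n-1)*(n+2) + 3" using n1
      by (cases n) (auto simp: power2_eq_square algebra_simps)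
    hence "p dvd 3" using dv h by (metis dvd_add_right_iff dvd_mult2)
    moreover have "prime (3::nat)" by simp
    ultimately have "p = 3" using p primes_dvd_imp_eq by blast
    thus False using p3 by simp
  qed
  have pn: "\<not> p dvd n"
  proof
    assume "p dvd n"
    hence "p dvd n^2+n" by (simp add: power2_eq_square)
    hence "p dvd 1" using dv by (metis dvd_add_right_iff add.assoc)
    thus False using p by simp
  qed
  have ferm: "[n^(p-1) = 1] (mod p)" using fermat_theorem[OF p pn] .
  have "n^3 = (n-1)*(n^2+n+1) + 1" using n1
    by (cases n) (auto simp: power2_eq_square power3_eq_cube algebra_simps)
  hence c3: "[n^3 = 1] (mod p)" using dv
    by (metis cong_add_rcancel_0_nat cong_sym dvd_mult unity_coeff_ex cong_0_iff add.commute mult.commute)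
  define q where "q = (p-1) div 3"
  define r where "r = (p-1) mod 3"
  have "p - 1 = 3*q + r" by (simp add: q_def r_def)
  hence "n^(p-1) = (n^3)^q * n^r" by (simp add: power_add power_mult)
  moreover have "[(n^3)^q * n^r = 1^q * n^r] (mod p)" using c3 by (intro cong_mult cong_pow) auto
  ultimately have "[n^r = 1] (mod p)" using ferm by (metis cong_sym cong_trans power_one mult_1)
  moreover have "r < 3" by (simp add: r_def)
  ultimately consider "r = 0" | "r = 1" "[n = 1] (mod p)" | "r = 2" "[n^2 = 1] (mod p)"
  proof -
    assume c: "[n^r = 1] (mod p)" "r < 3"
      and t0: "r = 0 \<Longrightarrow> thesis" and t1: "r = 1 \<Longrightarrow> [n = 1] (mod p) \<Longrightarrow> thesis"
      and t2: "r = 2 \<Longrightarrow> [n^2 = 1] (mod p) \<Longrightarrow> thesis"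
    have "r = 0 \<or> r = 1 \<or> r = 2" using c(2) by auto
    thus thesis
    proof (elim disjE)
      assume "r = 0" thus thesis by (rule t0)
    next
      assume "r = 1" thus thesis using c(1) t1 by simp
    next
      assume "r = 2" thus thesis using c(1) t2 by simp
    qed
  qed
  then show ?thesis
  proof cases
    case 1
    have "p \<ge> 2" using p by (simp add: prime_ge_2_nat)
    thus ?thesis using 1 by (simp add: r_def) presburger
  next
    case 2
    hence "p dvd n - 1" using n1 by (simp add: cong_altdef_nat cong_sym_eq)
    thus ?thesis using key by blast
  next
    case 3
    have "n^2 \<ge> 1" using n1 by simp
    hence "p dvd n^2 - 1" using 3 by (simp add: cong_altdef_nat)
    moreover have "n^2 - 1 = (n-1)*(n+1)" using n1
      by (cases n) (auto simp: power2_eq_square algebra_simps)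
    ultimately have "p dvd (n-1)*(n+1)" by simp
    hence "p dvd n - 1 \<or> p dvd n + 1" using p prime_dvd_mult_iff by blast
    thus ?thesis
    proof
      assume "p dvd n - 1" thus ?thesis using key by blast
    next
      assume "p dvd n + 1"
      hence "p dvd n*(n+1)" by (rule dvd_mult)
      moreover have "n^2+n+1 = n*(n+1) + 1" by (simp add: power2_eq_square algebra_simps)
      ultimately have "p dvd 1" using dv by (metis dvd_add_right_iff)
      thus ?thesis using p by simp
    qed
  qed
qed

lemma num_ge2:
  fixes m p q :: nat
  assumes m: "m > 0" and p: "prime p" "p mod 3 = 1" and q: "prime q" "q mod 3 = 1"
    and pq: "p*q dvd m"
  shows "num_prime_factors_1mod3 m \<ge> 2"
proof -
  define S where "S = {p \<in> prime_factors m. p mod 3 = 1}"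
  have fin: "finite S" by (simp add: S_def)
  have pS: "p \<in> S" using p m pq by (auto simp: S_def in_prime_factors_iff intro: dvd_mult_left)
  have qS: "q \<in> S" using q m pq by (auto simp: S_def in_prime_factors_iff intro: dvd_mult_right)
  have mp: "multiplicity p m \<ge> 1" using p pq m
    by (intro multiplicity_geI) (auto intro: dvd_mult_left)
  have mq: "multiplicity q m \<ge> 1" using q pq m
    by (intro multiplicity_geI) (auto intro: dvd_mult_right)
  have num: "num_prime_factors_1mod3 m = (\<Sum>r\<in>S. multiplicity r m)"
    by (simp add: num_prime_factors_1mod3_def S_def)
  show ?thesis
  proof (cases "p = q")
    case True
    hence "p^2 dvd m" using pq by (simp add: power2_eq_square)
    hence "2 \<le> multiplicity p m" using p m by (intro multiplicity_geI) auto
    also have "multiplicity p m \<le> (\<Sum>r\<in>S. multiplicity r m)"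
      using fin pS by (intro member_le_sum) auto
    finally show ?thesis using num by simp
  next
    case False
    have "(\<Sum>r\<in>{p,q}. multiplicity r m) \<le> (\<Sum>r\<in>S. multiplicity r m)"
      using fin pS qS by (intro sum_mono2) auto
    moreover have "(\<Sum>r\<in>{p,q}. multiplicity r m) = multiplicity p m + multiplicity q m"
      using False by simp
    ultimately show ?thesis using num mp mq by simp
  qed
qed

lemma num_ge2_rev:
  fixes m :: nat
  assumes m: "m > 0" and h: "num_prime_factors_1mod3 m \<ge> 2"
  shows "\<exists>p q. prime p \<and> p mod 3 = 1 \<and> prime q \<and> q mod 3 = 1 \<and> p*q dvd m"
proof -
  define S where "S = {p \<in> prime_factors m. p mod 3 = 1}"
  have num: "num_prime_factors_1mod3 m = (\<Sum>r\<in>S. multiplicity r m)"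
    by (simp add: num_prime_factors_1mod3_def S_def)
  have "S \<noteq> {}" using h num by auto
  then obtain p where pS: "p \<in> S" by blast
  hence p: "prime p" "p mod 3 = 1" "p dvd m" by (auto simp: S_def in_prime_factors_iff)
  show ?thesis
  proof (cases "\<exists>q\<in>S. q \<noteq> p")
    case True
    then obtain q where qS: "q \<in> S" "q \<noteq> p" by blast
    hence q: "prime q" "q mod 3 = 1" "q dvd m" by (auto simp: S_def in_prime_factors_iff)
    have "coprime p q" using p q qS(2) by (simp add: primes_coprime)
    hence "p*q dvd m" using p q by (simp add: divides_mult)
    thus ?thesis using p q by blast
  next
    case False
    hence "S = {p}" using pS by blast
    hence "multiplicity p m \<ge> 2" using h num by simp
    hence "p^2 dvd m" by (rule multiplicity_dvd')
    hence "p*p dvd m" by (simp add: power2_eq_square)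
    thus ?thesis using p by blast
  qed
qed

definition good :: "int \<Rightarrow> int \<Rightarrow> int \<Rightarrow> bool" where
  "good n x y \<longleftrightarrow> x^2+x*y+y^2 = n^2+n+1 \<and> \<not> (n^2+n+1) dvd (x - n*y)
     \<and> \<not> (n^2+n+1) dvd (x + (n+1)*y)"

lemma good_neg: "good n x y \<Longrightarrow> good n (-x) (-y)"
proof -
  assume g: "good n x y"
  have a: "-x - n*(-y) = -(x - n*y)" and b: "-x + (n+1)*(-y) = -(x + (n+1)*y)"
    by (simp_all add: algebra_simps)
  have "\<not> (n^2+n+1) dvd -(x - n*y)" "\<not> (n^2+n+1) dvd -(x + (n+1)*y)"
    using g unfolding good_def dvd_minus_iff by simp_all
  hence "\<not> (n^2+n+1) dvd (-x - n*(-y))" "\<not> (n^2+n+1) dvd (-x + (n+1)*(-y))"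
    unfolding a b .
  moreover have "(-x)^2+(-x)*(-y)+(-y)^2 = x^2+x*y+y^2" by (simp add: power2_eq_square)
  ultimately show ?thesis using g unfolding good_def by simp
qed

lemma good_shear: "good n x y \<Longrightarrow> good n (x+y) (-y)"
proof -
  assume g: "good n x y"
  have a: "(x+y) - n*(-y) = x + (n+1)*y" and b: "(x+y) + (n+1)*(-y) = x - n*y"
    by (simp_all add: algebra_simps)
  have "\<not> (n^2+n+1) dvd (x + (n+1)*y)" "\<not> (n^2+n+1) dvd (x - n*y)"
    using g unfolding good_def by simp_all
  hence "\<not> (n^2+n+1) dvd ((x+y) - n*(-y))" "\<not> (n^2+n+1) dvd ((x+y) + (n+1)*(-y))"
    unfolding a b .
  moreover have "(x+y)^2+(x+y)*(-y)+(-y)^2 = x^2+x*y+y^2" by (simp add: algebra_simps power2_eq_square)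
  ultimately show ?thesis using g unfolding good_def by simp
qed

lemma good_swap: "good n x y \<Longrightarrow> good n y x"
proof -
  assume g: "good n x y"
  have e1: "x + (n+1)*y = (n+1)*(y - n*x) + (n^2+n+1)*x" by (simp add: algebra_simps power2_eq_square)
  have e2: "x - n*y = (n^2+n+1)*x - n*(y + (n+1)*x)" by (simp add: algebra_simps power2_eq_square)
  have "\<not> (n^2+n+1) dvd (y - n*x)"
  proof
    assume "(n^2+n+1) dvd (y - n*x)"
    hence "(n^2+n+1) dvd (n+1)*(y - n*x) + (n^2+n+1)*x" by simp
    hence "(n^2+n+1) dvd (x + (n+1)*y)" unfolding e1[symmetric] .
    thus False using g by (simp add: good_def)
  qed
  moreover have "\<not> (n^2+n+1) dvd (y + (n+1)*x)"
  proof
    assume "(n^2+n+1) dvd (y + (n+1)*x)"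
    hence "(n^2+n+1) dvd (n^2+n+1)*x - n*(y + (n+1)*x)" by simp
    hence "(n^2+n+1) dvd (x - n*y)" unfolding e2[symmetric] .
    thus False using g by (simp add: good_def)
  qed
  moreover have "y^2+y*x+x^2 = x^2+x*y+y^2" by (simp add: algebra_simps)
  ultimately show ?thesis using g unfolding good_def by simp
qed

lemma normalize:
  assumes n1: "n \<ge> 1" and g: "good n x y"
  shows "\<exists>u v. u \<ge> 1 \<and> v \<ge> 1 \<and> good n u v"
proof -
  have Q: "x^2+x*y+y^2 = n^2+n+1" using g by (simp add: good_def)
  have x0: "x \<noteq> 0" using Q notsq[OF n1, of y] by auto
  have y0: "y \<noteq> 0" using Q notsq[OF n1, of x] by auto
  have xy0: "x + y \<noteq> 0"
  proof
    assume "x + y = 0" hence "y = -x" by simp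
    hence "x^2 = n^2+n+1" using Q by (simp add: power2_eq_square)
    thus False using notsq[OF n1, of x] by simp
  qed
  consider "x > 0" "y > 0" | "x < 0" "y < 0" | "x > 0" "y < 0" "x + y > 0" | "x > 0" "y < 0" "x + y < 0"
    | "x < 0" "y > 0" "x + y > 0" | "x < 0" "y > 0" "x + y < 0"
    using x0 y0 xy0 by linarith
  then show ?thesis
  proof cases
    case 1 thus ?thesis using g by (intro exI[of _ x] exI[of _ y]) simp
  next
    case 2 thus ?thesis using good_neg[OF g] by (intro exI[of _ "-x"] exI[of _ "-y"]) simp
  next
    case 3 thus ?thesis using good_shear[OF g] by (intro exI[of _ "x+y"] exI[of _ "-y"]) simp
  next
    case 4
    have "good n (-(y+x)) (-(-x))" using good_neg[OF good_shear[OF good_swap[OF g]]] .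
    thus ?thesis using 4 by (intro exI[of _ "-(y+x)"] exI[of _ x]) simp
  next
    case 5
    have "good n (y+x) (-x)" using good_shear[OF good_swap[OF g]] .
    thus ?thesis using 5 by (intro exI[of _ "y+x"] exI[of _ "-x"]) simp
  next
    case 6
    have "good n (-(x+y)) (-(-y))" using good_neg[OF good_shear[OF g]] .
    thus ?thesis using 6 by (intro exI[of _ "-(x+y)"] exI[of _ y]) simp
  qed
qed

lemma bad_common:
  fixes r :: nat and m x y :: int
  assumes m1: "m \<ge> 1" and r: "prime r" "r mod 3 = 1" and rN: "int r dvd m^2+m+1"
    and rA: "int r dvd x - m*y" and rB: "int r dvd x + (m+1)*y"
    and Q: "x^2+x*y+y^2 = m^2+m+1"
    and N: "(m^2+m+1) dvd (x - m*y) \<or> (m^2+m+1) dvd (x + (m+1)*y)"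
  shows False
proof -
  have ri: "prime (int r)" using r by simp
  have "int r dvd (x + (m+1)*y) - (x - m*y)" using rA rB by (rule dvd_diff[rotated])
  moreover have "(x + (m+1)*y) - (x - m*y) = (2*m+1)*y" by (simp add: algebra_simps)
  ultimately have ry: "int r dvd (2*m+1)*y" by simp
  have "\<not> int r dvd 2*m+1"
  proof
    assume h: "int r dvd 2*m+1"
    have "3 = 4*(m^2+m+1) - (2*m+1)*(2*m+1)" by (simp add: algebra_simps power2_eq_square)
    moreover have "int r dvd 4*(m^2+m+1) - (2*m+1)*(2*m+1)" using h rN by (intro dvd_diff dvd_mult dvd_mult2)
    ultimately have "int r dvd 3" by metis
    hence "r dvd 3" by presburger
    moreover have "prime (3::nat)" by simp
    ultimately have "r = 3" using r(1) primes_dvd_imp_eq by blast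
    thus False using r(2) by simp
  qed
  hence y: "int r dvd y" using ry ri by (simp add: prime_dvd_mult_iff)
  hence "int r dvd (x - m*y) + m*y" using rA by (intro dvd_add dvd_mult)
  hence x: "int r dvd x" by simp
  have "int r dvd 1" using N
  proof
    assume "(m^2+m+1) dvd (x - m*y)" thus ?thesis using prim_A[OF Q _ x y m1] by simp
  next
    assume "(m^2+m+1) dvd (x + (m+1)*y)" thus ?thesis using prim_B[OF Q _ x y m1] by simp
  qed
  thus False using r(1) by simp
qed

lemma key_bwd:
  fixes n :: nat
  assumes n1: "n \<ge> 1" and h: "num_prime_factors_1mod3 (n^2+n+1) \<ge> 2"
  shows "\<exists>u v::int. u \<ge> 2 \<and> v \<ge> 2 \<and> u^2+u*v+v^2 = (int n)^2 + int n + 1"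
proof -
  define m where "m = int n"
  have m1: "m \<ge> 1" using n1 by (simp add: m_def)
  have Nint: "int (n^2+n+1) = m^2+m+1" by (simp add: m_def)
  obtain p q where pq: "prime p" "p mod 3 = 1" "prime q" "q mod 3 = 1" "p*q dvd n^2+n+1"
    using num_ge2_rev[OF _ h] by auto
  obtain k where k: "n^2+n+1 = p*q*k" using pq(5) by blast
  have pp: "p > 0" using pq(1) prime_gt_0_nat by blast
  have dv: "(n^2+n+1) div p = q*k" using k pp by simp
  define d where "d = int (q*k)"
  define e where "e = int p"
  have de: "d*e = m^2+m+1" unfolding d_def e_def Nint[symmetric] k by simp
  have kpos: "k > 0" using k by (cases "k = 0") auto
  have qpos: "q > 0" using pq(3) prime_gt_0_nat by blast
  have "q*k \<ge> 1" using kpos qpos by simp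
  hence d1: "d \<ge> 1" unfolding d_def by (metis of_nat_le_iff of_nat_1)
  have e1: "e \<ge> 1" using pp by (simp add: e_def)
  obtain x y where xy: "x^2+x*y+y^2 = m^2+m+1" "d dvd x - m*y" "e dvd x + (m+1)*y"
    using lattice[OF m1 d1 e1 de] by blast
  have pN: "int p dvd m^2+m+1" unfolding Nint[symmetric] k by simp
  have qN: "int q dvd m^2+m+1" unfolding Nint[symmetric] k by simp
  have qd: "int q dvd d" by (simp add: d_def)
  have gA: "\<not> (m^2+m+1) dvd (x - m*y)"
  proof
    assume h: "(m^2+m+1) dvd (x - m*y)"
    hence "int p dvd x - m*y" using pN dvd_trans by blast
    thus False using bad_common[OF m1 pq(1,2) pN _ _ xy(1)] xy(3) h by (simp add: e_def)
  qed
  have gB: "\<not> (m^2+m+1) dvd (x + (m+1)*y)"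
  proof
    assume h: "(m^2+m+1) dvd (x + (m+1)*y)"
    hence "int q dvd x + (m+1)*y" using qN dvd_trans by blast
    moreover have "int q dvd x - m*y" using qd xy(2) dvd_trans by blast
    ultimately show False using bad_common[OF m1 pq(3,4) qN _ _ xy(1)] h by simp
  qed
  have "good m x y" using xy(1) gA gB by (simp add: good_def)
  then obtain u v where uv: "u \<ge> 1" "v \<ge> 1" "good m u v" using normalize[OF m1] by blast
  have Q: "u^2+u*v+v^2 = m^2+m+1" and nA: "\<not> (m^2+m+1) dvd (u - m*v)"
    and nB: "\<not> (m^2+m+1) dvd (u + (m+1)*v)" using uv(3) by (auto simp: good_def)
  have u2: "u \<noteq> 1"
  proof
    assume u: "u = 1"
    hence "(v - m)*(v + m + 1) = 0" using Q by (simp add: algebra_simps power2_eq_square)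
    moreover have "v + m + 1 \<noteq> 0" using uv(2) m1 by simp
    ultimately have "v = m" by simp
    hence "u + (m+1)*v = m^2+m+1" using u by (simp add: algebra_simps power2_eq_square)
    thus False using nB by simp
  qed
  have v2: "v \<noteq> 1"
  proof
    assume v: "v = 1"
    hence "(u - m)*(u + m + 1) = 0" using Q by (simp add: algebra_simps power2_eq_square)
    moreover have "u + m + 1 \<noteq> 0" using uv(1) m1 by simp
    ultimately have "u = m" by simp
    hence "u - m*v = 0" using v by simp
    thus False using nA by simp
  qed
  show ?thesis using uv(1,2) u2 v2 Q by (intro exI[of _ u] exI[of _ v]) (simp add: m_def)
qed

lemma no3: "(3::int) dvd 3*a+1 \<Longrightarrow> False" by presburger

lemma three_split:
  fixes m u v :: int
  assumes m1: "m \<ge> 1" and Q: "u^2+u*v+v^2 = m^2+m+1"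
  obtains c M where "m^2+m+1 = c*M" "coprime c M" "c dvd (u - m*v)" "c dvd (u + (m+1)*v)"
    "\<not> 3 dvd M" "M > 0"
proof (cases "3 dvd m^2+m+1")
  case False
  have "m^2+m+1 > 0" using m1 by (simp add: add_pos_nonneg)
  thus ?thesis using that[of 1 "m^2+m+1"] False by simp
next
  case True
  define k where "k = m div 3"
  define r where "r = m mod 3"
  have mk: "m = 3*k + r" by (simp add: k_def r_def)
  have r: "r = 0 \<or> r = 1 \<or> r = 2" by (auto simp: r_def)
  have k0: "k \<ge> 0" using m1 by (simp add: k_def)
  have r1: "r = 1"
  proof (rule ccontr)
    assume "r \<noteq> 1"
    hence "r = 0 \<or> r = 2" using r by simp
    thus False
    proof
      assume "r = 0"
      hence "m^2+m+1 = 3*(3*k^2+k) + 1" using mk by (simp add: algebra_simps power2_eq_square)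
      thus False using True no3 by metis
    next
      assume "r = 2"
      hence "m^2+m+1 = 3*(3*k^2+5*k+2) + 1" using mk by (simp add: algebra_simps power2_eq_square)
      thus False using True no3 by metis
    qed
  qed
  define M where "M = 3*k^2+3*k+1"
  have NM: "m^2+m+1 = 3*M" using mk r1 by (simp add: M_def algebra_simps power2_eq_square)
  have "M = 3*(k^2+k)+1" by (simp add: M_def algebra_simps)
  hence M3: "\<not> 3 dvd M" using no3[of "k^2+k"] by metis
  have Mpos: "M > 0" using k0 by (simp add: M_def add_pos_nonneg)
  have cop: "coprime 3 M"
  proof -
    have "prime (3::int)" by simp
    thus ?thesis using M3 by (simp add: prime_imp_coprime)
  qed
  have "(u - v)^2 + 3*(u*v) = 3*M" using Q NM by (simp add: algebra_simps power2_eq_square)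
  hence "3 dvd (u - v)^2" by (metis dvd_add_right_iff dvd_triv_left add.commute)
  hence uv: "3 dvd u - v" using prime_dvd_power[of "3::int" "u - v" 2] by simp
  have eA: "u - m*v = (u - v) + 3*(-k*v)" using mk r1 by (simp add: algebra_simps)
  have A: "3 dvd u - m*v" unfolding eA using uv by (intro dvd_add) auto
  have eB: "u + (m+1)*v = (u - v) + 3*((k+1)*v)" using mk r1 by (simp add: algebra_simps)
  have B: "3 dvd u + (m+1)*v" unfolding eB using uv by (intro dvd_add) auto
  show ?thesis using that[OF NM cop A B M3 Mpos] .
qed

lemma key_fwd:
  fixes n :: nat and u v :: int
  assumes n1: "n \<ge> 1" and u: "u \<ge> 2" and v: "v \<ge> 2"
    and Q0: "u^2+u*v+v^2 = (int n)^2 + int n + 1"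
  shows "num_prime_factors_1mod3 (n^2+n+1) \<ge> 2"
proof -
  define m where "m = int n"
  have m1: "m \<ge> 1" using n1 by (simp add: m_def)
  have Nint: "int (n^2+n+1) = m^2+m+1" by (simp add: m_def)
  have Q: "u^2+u*v+v^2 = m^2+m+1" using Q0 by (simp add: m_def)
  define A where "A = u - m*v"
  define B where "B = u + (m+1)*v"
  have nA: "\<not> (m^2+m+1) dvd A"
  proof
    assume "(m^2+m+1) dvd A"
    hence "v = 1" using triv_A[OF m1 _ _ Q] u v by (simp add: A_def)
    thus False using v by simp
  qed
  have nB: "\<not> (m^2+m+1) dvd B"
  proof
    assume "(m^2+m+1) dvd B"
    hence "u = 1" using triv_B[OF m1 _ _ Q] u v by (simp add: B_def)
    thus False using u by simp
  qed
  have "u^2+u*v+v^2 = A*B + (m^2+m+1)*v^2" unfolding A_def B_def by (rule Q_decomp)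
  hence "A*B = (m^2+m+1)*(1 - v^2)" using Q by (simp add: algebra_simps)
  hence NAB: "(m^2+m+1) dvd A*B" by simp
  obtain c M where cM: "m^2+m+1 = c*M" "coprime c M" "c dvd A" "c dvd B" "\<not> 3 dvd M" "M > 0"
    using three_split[OF m1 Q] unfolding A_def B_def by metis
  have MN: "M dvd m^2+m+1" using cM(1) by simp
  have MA: "\<not> M dvd A"
  proof
    assume "M dvd A"
    hence "c*M dvd A" using cM(2,3) by (simp add: divides_mult)
    thus False using nA cM(1) by simp
  qed
  have MB: "\<not> M dvd B"
  proof
    assume "M dvd B"
    hence "c*M dvd B" using cM(2,4) by (simp add: divides_mult)
    thus False using nB cM(1) by simp
  qed
  define g where "g = gcd M A"
  define h where "h = M div g"
  have g0: "g > 0" using cM(6) by (simp add: g_def)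
  have gM: "g dvd M" and gA: "g dvd A" by (simp_all add: g_def)
  have Mgh: "M = g*h" using gM by (simp add: h_def)
  have h0: "h > 0" using Mgh g0 cM(6) by (simp add: zero_less_mult_iff)
  have cop: "coprime h (A div g)" unfolding h_def g_def using cM(6) by (intro div_gcd_coprime) simp
  obtain a' where a': "A = g*a'" using gA by blast
  have "M dvd A*B" using MN NAB dvd_trans by blast
  hence "g*h dvd g*(a'*B)" using Mgh a' by (simp add: mult.assoc)
  hence "h dvd a'*B" using g0 by simp
  moreover have "A div g = a'" using a' g0 by simp
  ultimately have hB: "h dvd B" using cop coprime_dvd_mult_right_iff by metis
  have h1: "h \<noteq> 1"
  proof
    assume "h = 1" hence "M = g" using Mgh by simp
    thus False using MA gA by simp
  qed
  have g1: "g \<noteq> 1"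
  proof
    assume "g = 1" hence "M = h" using Mgh by simp
    thus False using MB hB by simp
  qed
  have ng: "nat g \<noteq> 1" using g0 g1 by (simp add: nat_eq_iff)
  have nh: "nat h \<noteq> 1" using h0 h1 by (simp add: nat_eq_iff)
  obtain p where p: "prime p" "p dvd nat g" using prime_factor_nat[OF ng] by blast
  obtain q where q: "prime q" "q dvd nat h" using prime_factor_nat[OF nh] by blast
  have "int p dvd int (nat g)" using p(2) by (simp only: int_dvd_int_iff)
  hence pg: "int p dvd g" using g0 by simp
  have "int q dvd int (nat h)" using q(2) by (simp only: int_dvd_int_iff)
  hence qh: "int q dvd h" using h0 by simp
  have "int p * int q dvd g*h" using pg qh by (rule mult_dvd_mono)
  hence pqM: "int p * int q dvd M" using Mgh by simp
  hence "int p * int q dvd m^2+m+1" using MN by (rule dvd_trans)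
  hence "int (p*q) dvd int (n^2+n+1)" unfolding Nint by simp
  hence pqN: "p*q dvd n^2+n+1" by (simp only: int_dvd_int_iff)
  have pM: "int p dvd M" using pqM by (metis dvd_mult_left)
  have qM: "int q dvd M" using pqM by (metis dvd_mult_right)
  have p3: "p \<noteq> 3" using pM cM(5) by auto
  have q3: "q \<noteq> 3" using qM cM(5) by auto
  have pm: "p mod 3 = 1" using prime_mod3[OF p(1) _ p3] pqN by (metis dvd_mult_left)
  have qm: "q mod 3 = 1" using prime_mod3[OF q(1) _ q3] pqN by (metis dvd_mult_right)
  show ?thesis using num_ge2[OF _ p(1) pm q(1) qm pqN] by simp
qed

lemma step_sum:
  fixes S T m :: int
  assumes a: "2*S = m*(m+1)" and b: "4*T = (m*(m+1))^2"
  shows "2*((1+m)+S) = (1+m)*((1+m)+1) \<and> 4*((1+m)^3+T) = ((1+m)*((1+m)+1))^2"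
proof
  have "2*((1+m)+S) = 2*(1+m) + 2*S" by (simp only: distrib_left)
  also have "\<dots> = 2*(1+m) + m*(m+1)" by (simp only: a)
  also have "\<dots> = (1+m)*((1+m)+1)" by (simp add: algebra_simps)
  finally show "2*((1+m)+S) = (1+m)*((1+m)+1)" .
  have "4*((1+m)^3+T) = 4*(1+m)^3 + 4*T" by (simp only: distrib_left)
  also have "\<dots> = 4*(1+m)^3 + (m*(m+1))^2" by (simp only: b)
  also have "\<dots> = ((1+m)*((1+m)+1))^2" by (simp add: algebra_simps power2_eq_square power3_eq_cube)
  finally show "4*((1+m)^3+T) = ((1+m)*((1+m)+1))^2" .
qed

lemma sums: "2*(\<Sum>j=1..int n. j) = int n*(int n+1) \<and> 4*(\<Sum>j=1..int n. j^3) = (int n*(int n+1))^2"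
proof (induction n)
  case 0 thus ?case by simp
next
  case (Suc n)
  have I: "{1..1 + int n} = insert (1 + int n) {1..int n}"
    using atLeastAtMostPlus1_int_conv[of 1 "int n"] by simp
  have nm: "1 + int n \<notin> {1..int n}" by auto
  have s1: "(\<Sum>j=1..1 + int n. j) = (1 + int n) + (\<Sum>j=1..int n. j)"
    unfolding I by (rule sum.insert[OF finite_atLeastAtMost_int nm])
  have s3: "(\<Sum>j=1..1 + int n. j^3) = (1 + int n)^3 + (\<Sum>j=1..int n. j^3)"
    unfolding I by (rule sum.insert[OF finite_atLeastAtMost_int nm])
  have su: "int (Suc n) = 1 + int n" by simp
  show ?case unfolding su s1 s3 by (rule step_sum[OF conjunct1[OF Suc.IH] conjunct2[OF Suc.IH]])
qed

lemma core:
  fixes S1 S3 m x k :: int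
  assumes h1: "2*S1 = m*(m+1)" and h3: "4*S3 = (m*(m+1))^2" and xk: "x \<noteq> k"
  shows "S3 + x^3 - k^3 = (S1 + x - k)^2 \<longleftrightarrow> (x-1)^2 + (x-1)*(k+1) + (k+1)^2 = m^2+m+1"
proof -
  have "4*S3 = (2*S1)^2" unfolding h1 h3 by (rule refl)
  also have "\<dots> = 4*S1^2" by (simp add: power2_eq_square)
  finally have S3: "S3 = S1^2" by simp
  have e: "(S1 + x - k)^2 = S1^2 + (2*S1)*(x-k) + (x-k)^2" by (simp add: algebra_simps power2_eq_square)
  define F where "F = (x-1)^2 + (x-1)*(k+1) + (k+1)^2 - (m^2+m+1)"
  have d: "S3 + x^3 - k^3 - (S1 + x - k)^2 = (x-k)*F"
    unfolding e h1 S3 F_def by (simp add: algebra_simps power2_eq_square power3_eq_cube)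
  have "S3 + x^3 - k^3 = (S1 + x - k)^2 \<longleftrightarrow> (x-k)*F = 0"
    unfolding d[symmetric] right_minus_eq by (rule refl)
  also have "\<dots> \<longleftrightarrow> F = 0" using xk by simp
  also have "\<dots> \<longleftrightarrow> (x-1)^2 + (x-1)*(k+1) + (k+1)^2 = m^2+m+1" unfolding F_def right_minus_eq by (rule refl)
  finally show ?thesis .
qed

lemma not_n:
  fixes m u v :: int
  assumes m1: "m \<ge> 1" and u: "u \<ge> 2" and Q: "u^2+u*v+v^2 = m^2+m+1"
  shows "v \<noteq> m"
proof
  assume "v = m"
  hence e: "u*u + u*m = m + 1" using Q by (simp add: power2_eq_square)
  have a: "u*u \<ge> 2*2" using u by (intro mult_mono) auto
  have b: "u*m \<ge> 2*m" using u m1 by (intro mult_right_mono) auto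
  show False using e a b m1 by (smt (verit))
qed

lemma reform:
  fixes n :: nat
  assumes n1: "n \<ge> 1"
  shows "(\<exists>k x. nontrivial_solution n k x) \<longleftrightarrow>
    (\<exists>u v::int. u \<ge> 2 \<and> v \<ge> 2 \<and> u^2+u*v+v^2 = (int n)^2 + int n + 1)"
proof -
  define m where "m = int n"
  have m1: "m \<ge> 1" using n1 by (simp add: m_def)
  have h1: "2*(\<Sum>j=1..m. j) = m*(m+1)" and h3: "4*(\<Sum>j=1..m. j^3) = (m*(m+1))^2"
    using sums[of n] by (simp_all add: m_def)
  have ns: "nontrivial_solution n k x \<longleftrightarrow> k \<ge> 1 \<and> x \<ge> 2 \<and> x \<noteq> k \<and> x \<noteq> 2 \<and> k \<noteq> m - 1 \<and>
      (x-1)^2 + (x-1)*(k+1) + (k+1)^2 = m^2+m+1" for k x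
  proof (cases "x = k")
    case True thus ?thesis by (simp add: nontrivial_solution_def)
  next
    case False
    show ?thesis unfolding nontrivial_solution_def m_def[symmetric]
      using core[OF h1 h3 False] by blast
  qed
  show ?thesis
  proof
    assume "\<exists>k x. nontrivial_solution n k x"
    then obtain k x where "nontrivial_solution n k x" by blast
    hence kx: "k \<ge> 1" "x \<ge> 2" "x \<noteq> 2" "(x-1)^2 + (x-1)*(k+1) + (k+1)^2 = m^2+m+1"
      using ns by auto
    show "\<exists>u v::int. u \<ge> 2 \<and> v \<ge> 2 \<and> u^2+u*v+v^2 = (int n)^2 + int n + 1"
      using kx by (intro exI[of _ "x-1"] exI[of _ "k+1"]) (simp add: m_def)
  next
    assume "\<exists>u v::int. u \<ge> 2 \<and> v \<ge> 2 \<and> u^2+u*v+v^2 = (int n)^2 + int n + 1"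
    then obtain u v :: int where uv: "u \<ge> 2" "v \<ge> 2" "u^2+u*v+v^2 = m^2+m+1"
      by (auto simp: m_def)
    have uv': "v^2+v*u+u^2 = m^2+m+1" using uv(3) by (simp add: algebra_simps)
    have vm: "v \<noteq> m" using not_n[OF m1 uv(1) uv(3)] .
    have um: "u \<noteq> m" using not_n[OF m1 uv(2) uv'] .
    show "\<exists>k x. nontrivial_solution n k x"
    proof (cases "u = v - 2")
      case False
      have q: "(u+1-1)^2 + (u+1-1)*(v-1+1) + (v-1+1)^2 = m^2+m+1" using uv(3) by simp
      have "nontrivial_solution n (v-1) (u+1)"
        unfolding ns using uv(1,2) vm False q by (intro conjI) linarith+
      thus ?thesis by blast
    next
      case True
      have q: "(v+1-1)^2 + (v+1-1)*(u-1+1) + (u-1+1)^2 = m^2+m+1" using uv' by simp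
      have "nontrivial_solution n (u-1) (v+1)"
        unfolding ns using uv(1,2) um True q by (intro conjI) linarith+
      thus ?thesis by blast
    qed
  qed
qed

theorem theorem2:
  fixes n :: nat
  assumes "n \<ge> 1"
  shows "(\<exists>k x. nontrivial_solution n k x) \<longleftrightarrow>
         num_prime_factors_1mod3 (n^2 + n + 1) \<ge> 2"
  unfolding reform[OF assms] using key_fwd[OF assms] key_bwd[OF assms] by blast

end
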